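(* Let $f:[0,\infty)\to[0,\infty)$ be a differentiable convex function with $f(0)=0$, let $0<m<M$, and let $\sigma$ be a matrix mean. Then for all $A,B\in\mathbb{P}_n^+$ with spectra contained in $[m,M]$, $$f'(0)(A\sigma B)\le \frac{f(m)}{m}(A\sigma B)\le f(A)\sigma f(B)\le \frac{f(M)}{M}(A\sigma B)\le f'(M)(A\sigma B)$$ and $$f'(0)(A\sigma B)\le \frac{f(m)}{m}(A\sigma B)\le f(A\sigma B)\le \frac{f(M)}{M}(A\sigma B)\le f'(M)(A\sigma B).$$ If $f:[0,\infty)\to[0,\infty)$ is instead a differentiable concave function with $f(0)=0$, all these inequalities are reversed.
   Context: $\mathbb{P}_n$ (resp. $\mathbb{P}_n^+$) denotes the set of $n\times n$ complex positive semidefinite (resp. positive definite) matrices, $I$ is the identity matrix and $\le$ is the Löwner order. For a Hermitian matrix $A$ and a real function $f$ defined on its spectrum, $f(A)$ is defined by functional calculus. "Spectrum contained in $[m,M]$" means $mI\le A\le MI$. A matrix mean is a binary operation $\sigma:\mathbb{P}_n\times\mathbb{P}_n\to\mathbb{P}_n$ such that (i) $A\le C$ and $B\le D$ imply $A\sigma B\le C\sigma D$; (ii) $C^*(A\sigma B)C\le (C^*AC)\sigma(C^*BC)$ for all $C$; (iii) if $A_k\downarrow A$ and $B_k\downarrow B$ (decreasing sequences converging) then $A_k\sigma B_k\downarrow A\sigma B$; (iv) $I\sigma I=I$. *)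

theory Defs
  imports "HOL-Analysis.Convex" "Jordan_Normal_Form.Matrix"
begin

definition adj :: "complex mat \<Rightarrow> complex mat" where
  "adj A = transpose_mat (map_mat cnj A)"

definition hermitian :: "nat \<Rightarrow> complex mat \<Rightarrow> bool" where
  "hermitian n A \<longleftrightarrow> A \<in> carrier_mat n n \<and> adj A = A"

definition unitary :: "nat \<Rightarrow> complex mat \<Rightarrow> bool" where
  "unitary n U \<longleftrightarrow> U \<in> carrier_mat n n \<and> U * adj U = 1\<^sub>m n \<and> adj U * U = 1\<^sub>m n"

definition qform :: "complex mat \<Rightarrow> complex vec \<Rightarrow> complex" where
  "qform A x = scalar_prod (map_vec cnj x) (mult_mat_vec A x)"

definition psd :: "nat \<Rightarrow> complex mat \<Rightarrow> bool" where
  "psd n A \<longleftrightarrow> hermitian n A \<and>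
     (\<forall>x \<in> carrier_vec n. Im (qform A x) = 0 \<and> Re (qform A x) \<ge> 0)"

definition pd :: "nat \<Rightarrow> complex mat \<Rightarrow> bool" where
  "pd n A \<longleftrightarrow> hermitian n A \<and>
     (\<forall>x \<in> carrier_vec n. x \<noteq> 0\<^sub>v n \<longrightarrow> Im (qform A x) = 0 \<and> Re (qform A x) > 0)"

definition loewner_le :: "nat \<Rightarrow> complex mat \<Rightarrow> complex mat \<Rightarrow> bool" where
  "loewner_le n A B \<longleftrightarrow> hermitian n A \<and> hermitian n B \<and> psd n (B - A)"

definition scal_id :: "nat \<Rightarrow> real \<Rightarrow> complex mat" where
  "scal_id n c = complex_of_real c \<cdot>\<^sub>m 1\<^sub>m n"

text \<open>Spectrum contained in [m,M], i.e. mI \<le> A \<le> MI.\<close>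
definition spec_in :: "nat \<Rightarrow> real \<Rightarrow> real \<Rightarrow> complex mat \<Rightarrow> bool" where
  "spec_in n m M A \<longleftrightarrow> loewner_le n (scal_id n m) A \<and> loewner_le n A (scal_id n M)"

text \<open>Functional calculus for Hermitian matrices: if A = U diag(\<lambda>) U^* with U unitary and
  \<lambda> real, then f(A) = U diag(f(\<lambda>)) U^* (this is independent of the chosen decomposition).\<close>
definition mat_fun :: "nat \<Rightarrow> (real \<Rightarrow> real) \<Rightarrow> complex mat \<Rightarrow> complex mat" where
  "mat_fun n f A = (SOME B. \<exists>U lam. unitary n U \<and>
       A = U * mat_diag n (\<lambda>i. complex_of_real (lam i)) * adj U \<and>
       B = U * mat_diag n (\<lambda>i. complex_of_real (f (lam i))) * adj U)"

definition mat_lim :: "nat \<Rightarrow> (nat \<Rightarrow> complex mat) \<Rightarrow> complex mat \<Rightarrow> bool" where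
  "mat_lim n X L \<longleftrightarrow> (\<forall>i<n. \<forall>j<n. (\<lambda>k. X k $$ (i,j)) \<longlonglongrightarrow> L $$ (i,j))"

definition mat_decr_to :: "nat \<Rightarrow> (nat \<Rightarrow> complex mat) \<Rightarrow> complex mat \<Rightarrow> bool" where
  "mat_decr_to n X L \<longleftrightarrow> (\<forall>k. loewner_le n (X (Suc k)) (X k)) \<and> mat_lim n X L"

definition matrix_mean :: "nat \<Rightarrow> (complex mat \<Rightarrow> complex mat \<Rightarrow> complex mat) \<Rightarrow> bool" where
  "matrix_mean n sigma \<longleftrightarrow>
     (\<forall>A B. psd n A \<and> psd n B \<longrightarrow> psd n (sigma A B)) \<and>
     (\<forall>A B C D. psd n A \<and> psd n B \<and> psd n C \<and> psd n D \<and>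
        loewner_le n A C \<and> loewner_le n B D \<longrightarrow> loewner_le n (sigma A B) (sigma C D)) \<and>
     (\<forall>A B C. psd n A \<and> psd n B \<and> C \<in> carrier_mat n n \<longrightarrow>
        loewner_le n (adj C * sigma A B * C) (sigma (adj C * A * C) (adj C * B * C))) \<and>
     (\<forall>X Y A B. (\<forall>k. psd n (X k) \<and> psd n (Y k)) \<and> psd n A \<and> psd n B \<and>
        mat_decr_to n X A \<and> mat_decr_to n Y B \<longrightarrow>
        mat_decr_to n (\<lambda>k. sigma (X k) (Y k)) (sigma A B)) \<and>
     sigma (1\<^sub>m n) (1\<^sub>m n) = 1\<^sub>m n"

end

theory Submission
  imports Defs "Jordan_Normal_Form.Char_Poly"
begin


lemma adj_carrier[simp]: "A \<in> carrier_mat n m \<Longrightarrow> adj A \<in> carrier_mat m n"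
  by (auto simp: adj_def)
lemma adj_dims[simp]: "dim_row (adj A) = dim_col A" "dim_col (adj A) = dim_row A"
  by (auto simp: adj_def)
lemma adj_index[simp]: "i < dim_col A \<Longrightarrow> j < dim_row A \<Longrightarrow> adj A $$ (i,j) = cnj (A $$ (j,i))"
  by (auto simp: adj_def)
lemma adj_adj[simp]: "adj (adj A) = A"
  by (intro eq_matI, auto)
lemma adj_mult: assumes "A \<in> carrier_mat n k" "B \<in> carrier_mat k m"
  shows "adj (A * B) = adj B * adj A"
  using assms by (intro eq_matI) (auto simp: scalar_prod_def row_def col_def mult.commute)
lemma adj_one[simp]: "adj (1\<^sub>m n) = 1\<^sub>m n"
  by (intro eq_matI, auto)
lemma adj_add: assumes "A \<in> carrier_mat n m" "B \<in> carrier_mat n m"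
  shows "adj (A + B) = adj A + adj B"
  using assms by (intro eq_matI) auto
lemma adj_minus: assumes "A \<in> carrier_mat n m" "B \<in> carrier_mat n m"
  shows "adj (A - B) = adj A - adj B"
  using assms by (intro eq_matI) auto
lemma adj_smult: "adj (c \<cdot>\<^sub>m A) = cnj c \<cdot>\<^sub>m adj A"
  by (intro eq_matI) auto
lemma adj_zero[simp]: "adj (0\<^sub>m n m) = 0\<^sub>m m n"
  by (intro eq_matI) auto
lemma adj_diag: "adj (mat_diag n (\<lambda>i. complex_of_real (d i))) = mat_diag n (\<lambda>i. complex_of_real (d i))"
  by (intro eq_matI) (auto simp: mat_diag_def)

lemma qform_sum: assumes A: "A \<in> carrier_mat n n" and x: "x \<in> carrier_vec n"
  shows "qform A x = (\<Sum>i<n. \<Sum>j<n. cnj (x$i) * A $$ (i,j) * x $ j)"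
  using assms by (auto simp: qform_def scalar_prod_def row_def sum_distrib_left mult.assoc atLeast0LessThan intro!: sum.cong)

lemma qform_add: assumes "A \<in> carrier_mat n n" "B \<in> carrier_mat n n" "x \<in> carrier_vec n"
  shows "qform (A + B) x = qform A x + qform B x"
  using assms by (simp add: qform_def add_mult_distrib_mat_vec scalar_prod_add_distrib[of _ n])
lemma qform_minus: assumes "A \<in> carrier_mat n n" "B \<in> carrier_mat n n" "x \<in> carrier_vec n"
  shows "qform (A - B) x = qform A x - qform B x"
  using assms by (simp add: qform_def minus_mult_distrib_mat_vec scalar_prod_minus_distrib[of _ n])
lemma cnj_adj_swap: assumes C: "C \<in> carrier_mat n n" and x: "x \<in> carrier_vec n" and w: "w \<in> carrier_vec n"
  shows "map_vec cnj x \<bullet> (adj C *\<^sub>v w) = map_vec cnj (C *\<^sub>v x) \<bullet> w"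
proof -
  have "map_vec cnj x \<bullet> (adj C *\<^sub>v w) = (\<Sum>i<n. \<Sum>j<n. cnj (x$i) * (cnj (C$$(j,i)) * w$j))"
    using assms by (auto simp: scalar_prod_def row_def sum_distrib_left atLeast0LessThan intro!: sum.cong)
  also have "\<dots> = (\<Sum>j<n. \<Sum>i<n. cnj (x$i) * (cnj (C$$(j,i)) * w$j))"
    by (rule sum.swap)
  also have "\<dots> = map_vec cnj (C *\<^sub>v x) \<bullet> w"
    using assms by (auto simp: scalar_prod_def row_def sum_distrib_right atLeast0LessThan cnj_sum
       intro!: sum.cong)
  finally show ?thesis .
qed

lemma qform_congr: assumes C: "C \<in> carrier_mat n n" and X: "X \<in> carrier_mat n n" and x: "x \<in> carrier_vec n"
  shows "qform (adj C * X * C) x = qform X (C *\<^sub>v x)"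
proof -
  have "qform (adj C * X * C) x = map_vec cnj x \<bullet> (adj C *\<^sub>v (X *\<^sub>v (C *\<^sub>v x)))"
    unfolding qform_def using C X x
    by (subst assoc_mult_mat_vec[of _ n n _ n], auto simp: assoc_mult_mat_vec[of _ n n _ n])
  also have "\<dots> = map_vec cnj (C *\<^sub>v x) \<bullet> (X *\<^sub>v (C *\<^sub>v x))"
    using C X x by (intro cnj_adj_swap[of _ n]) auto
  finally show ?thesis unfolding qform_def .
qed

lemma smult_mat_vec: "A \<in> carrier_mat n n \<Longrightarrow> x \<in> carrier_vec n \<Longrightarrow> (c \<cdot>\<^sub>m A) *\<^sub>v x = c \<cdot>\<^sub>v (A *\<^sub>v x)"
  by (intro eq_vecI) (auto simp: scalar_prod_def row_def sum_distrib_left mult.assoc)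
lemma qform_smult: assumes "A \<in> carrier_mat n n" "x \<in> carrier_vec n"
  shows "qform (c \<cdot>\<^sub>m A) x = c * qform A x"
  using assms by (simp add: qform_def smult_mat_vec scalar_prod_smult_right)


lemma herm_add: "hermitian n A \<Longrightarrow> hermitian n B \<Longrightarrow> hermitian n (A + B)"
  by (auto simp: hermitian_def adj_add)
lemma herm_minus: "hermitian n A \<Longrightarrow> hermitian n B \<Longrightarrow> hermitian n (A - B)"
  by (auto simp: hermitian_def adj_minus)
lemma herm_smult: "hermitian n A \<Longrightarrow> hermitian n (complex_of_real c \<cdot>\<^sub>m A)"
  by (auto simp: hermitian_def adj_smult)
lemma herm_one: "hermitian n (1\<^sub>m n)"
  by (auto simp: hermitian_def)
lemma herm_congr: assumes "hermitian n X" "C \<in> carrier_mat n n"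
  shows "hermitian n (adj C * X * C)"
  using assms unfolding hermitian_def
  by (auto simp: adj_mult[of _ n n _ n] assoc_mult_mat[of _ n n _ n _ n])

lemma psd_herm: "psd n A \<Longrightarrow> hermitian n A" by (simp add: psd_def)
lemma psd_carrier: "psd n A \<Longrightarrow> A \<in> carrier_mat n n" by (simp add: psd_def hermitian_def)

lemma psd_add: assumes "psd n A" "psd n B" shows "psd n (A + B)"
proof -
  have h: "hermitian n (A + B)" using assms by (simp add: psd_def herm_add)
  have c: "A \<in> carrier_mat n n" "B \<in> carrier_mat n n" using assms psd_carrier by auto
  show ?thesis using assms h c unfolding psd_def by (auto simp: qform_add[of _ n])
qed
lemma psd_smult: assumes "psd n A" "c \<ge> 0" shows "psd n (complex_of_real c \<cdot>\<^sub>m A)"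
proof -
  have h: "hermitian n (complex_of_real c \<cdot>\<^sub>m A)" using assms by (simp add: psd_def herm_smult)
  have c: "A \<in> carrier_mat n n" using assms psd_carrier by auto
  show ?thesis using assms h c unfolding psd_def by (auto simp: qform_smult[of _ n])
qed
lemma psd_congr: assumes "psd n X" "C \<in> carrier_mat n n" shows "psd n (adj C * X * C)"
proof -
  have h: "hermitian n (adj C * X * C)" using assms by (simp add: psd_def herm_congr)
  have c: "X \<in> carrier_mat n n" using assms psd_carrier by auto
  show ?thesis using assms h c unfolding psd_def by (auto simp: qform_congr[of _ n])
qed
lemma psd_zero: "psd n (0\<^sub>m n n)"
  unfolding psd_def hermitian_def qform_def by (auto simp: scalar_prod_def)

lemma loewner_trans: assumes "loewner_le n A B" "loewner_le n B C" shows "loewner_le n A C"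
proof -
  have c: "A \<in> carrier_mat n n" "B \<in> carrier_mat n n" "C \<in> carrier_mat n n"
    using assms by (auto simp: loewner_le_def hermitian_def)
  have "C - A = (C - B) + (B - A)" using c by auto
  then show ?thesis using assms psd_add[of n "C - B" "B - A"] by (auto simp: loewner_le_def)
qed

lemma loewner_smult: assumes "loewner_le n A B" "c \<ge> 0"
  shows "loewner_le n (complex_of_real c \<cdot>\<^sub>m A) (complex_of_real c \<cdot>\<^sub>m B)"
proof -
  have c: "A \<in> carrier_mat n n" "B \<in> carrier_mat n n"
    using assms by (auto simp: loewner_le_def hermitian_def)
  have "complex_of_real c \<cdot>\<^sub>m B - complex_of_real c \<cdot>\<^sub>m A = complex_of_real c \<cdot>\<^sub>m (B - A)"
    using c by (auto simp: algebra_simps)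
  then show ?thesis using assms psd_smult[of n "B - A" c] by (auto simp: loewner_le_def herm_smult)
qed

lemma loewner_scal: assumes "psd n X" "a \<le> b"
  shows "loewner_le n (complex_of_real a \<cdot>\<^sub>m X) (complex_of_real b \<cdot>\<^sub>m X)"
proof -
  have c: "X \<in> carrier_mat n n" using assms by (auto simp: psd_def hermitian_def)
  have "complex_of_real b \<cdot>\<^sub>m X - complex_of_real a \<cdot>\<^sub>m X = complex_of_real (b - a) \<cdot>\<^sub>m X"
    using c by (auto simp: algebra_simps)
  then show ?thesis using assms psd_smult[of n X "b - a"] by (auto simp: loewner_le_def herm_smult psd_def)
qed

lemma loewner_zero_left: assumes "psd n X" shows "loewner_le n (0\<^sub>m n n) X"
proof -
  have "X - 0\<^sub>m n n = X" using psd_carrier[OF assms] by auto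
  then show ?thesis using assms psd_zero unfolding loewner_le_def by (auto simp: psd_def)
qed


lemma unitary_carrier: "unitary n U \<Longrightarrow> U \<in> carrier_mat n n" by (simp add: unitary_def)

lemma udiag_index: assumes U: "U \<in> carrier_mat n n" and i: "i < n" and j: "j < n"
  shows "(U * mat_diag n d * adj U) $$ (i,j) = (\<Sum>k<n. U $$ (i,k) * d k * cnj (U $$ (j,k)))"
  using assms by (auto simp: mat_diag_mult_right[of U n n] scalar_prod_def row_def col_def atLeast0LessThan intro!: sum.cong)

lemma udiag_carrier[simp]: "U \<in> carrier_mat n n \<Longrightarrow> U * mat_diag n d * adj U \<in> carrier_mat n n"
  by auto

lemma udiag_minus: assumes U: "U \<in> carrier_mat n n"
  shows "U * mat_diag n a * adj U - U * mat_diag n b * adj U = U * mat_diag n (\<lambda>i. a i - b i) * adj U"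
proof (rule eq_matI)
  fix i j assume "i < dim_row (U * mat_diag n (\<lambda>i. a i - b i) * adj U)" "j < dim_col (U * mat_diag n (\<lambda>i. a i - b i) * adj U)"
  then have ij: "i < n" "j < n" using U by auto
  show "(U * mat_diag n a * adj U - U * mat_diag n b * adj U) $$ (i, j) = (U * mat_diag n (\<lambda>i. a i - b i) * adj U) $$ (i, j)"
    using ij U by (simp del: index_mult_mat(1) add: udiag_index[OF U] sum_subtractf[symmetric] algebra_simps)
qed (use U in auto)

lemma udiag_smult: assumes U: "U \<in> carrier_mat n n"
  shows "c \<cdot>\<^sub>m (U * mat_diag n a * adj U) = U * mat_diag n (\<lambda>i. c * a i) * adj U"
proof (rule eq_matI)
  fix i j assume "i < dim_row (U * mat_diag n (\<lambda>i. c * a i) * adj U)" "j < dim_col (U * mat_diag n (\<lambda>i. c * a i) * adj U)"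
  then have ij: "i < n" "j < n" using U by auto
  show "(c \<cdot>\<^sub>m (U * mat_diag n a * adj U)) $$ (i, j) = (U * mat_diag n (\<lambda>i. c * a i) * adj U) $$ (i, j)"
    using ij U by (simp del: index_mult_mat(1) add: udiag_index[OF U] sum_distrib_left algebra_simps)
qed (use U in auto)

lemma udiag_const: assumes U: "unitary n U"
  shows "U * mat_diag n (\<lambda>i. c) * adj U = c \<cdot>\<^sub>m 1\<^sub>m n"
proof -
  have Uc: "U \<in> carrier_mat n n" using U unitary_carrier by auto
  have "U * mat_diag n (\<lambda>i. c) * adj U = c \<cdot>\<^sub>m (U * mat_diag n (\<lambda>i. 1) * adj U)"
    using udiag_smult[OF Uc, of c "\<lambda>i. 1"] by simp
  also have "U * mat_diag n (\<lambda>i. 1) * adj U = 1\<^sub>m n"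
    using U Uc by (simp add: mat_diag_one unitary_def)
  finally show ?thesis .
qed

lemma qform_diag: assumes x: "x \<in> carrier_vec n"
  shows "qform (mat_diag n (\<lambda>i. complex_of_real (d i))) x = (\<Sum>i<n. complex_of_real (d i * (cmod (x $ i))\<^sup>2))"
proof -
  have "qform (mat_diag n (\<lambda>i. complex_of_real (d i))) x
     = (\<Sum>i<n. \<Sum>j<n. cnj (x$i) * (if i = j then complex_of_real (d j) else 0) * x $ j)"
    using x by (subst qform_sum[of _ n]) (auto simp: mat_diag_def intro!: sum.cong)
  also have "\<dots> = (\<Sum>i<n. cnj (x$i) * complex_of_real (d i) * x $ i)"
  proof (rule sum.cong[OF refl])
    fix i assume "i \<in> {..<n}"
    then show "(\<Sum>j<n. cnj (x$i) * (if i = j then complex_of_real (d j) else 0) * x $ j) = cnj (x$i) * complex_of_real (d i) * x $ i"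
      by (subst sum.cong[OF refl, of _ _ "\<lambda>j. if j = i then cnj (x$i) * complex_of_real (d i) * x $ i else 0"]) auto
  qed
  also have "\<dots> = (\<Sum>i<n. complex_of_real (d i * (cmod (x $ i))\<^sup>2))"
  proof (rule sum.cong[OF refl])
    fix i
    have "cnj (x$i) * complex_of_real (d i) * x $ i = complex_of_real (d i) * (x$i * cnj (x$i))"
      by (simp add: algebra_simps)
    also have "x$i * cnj (x$i) = complex_of_real ((cmod (x$i))\<^sup>2)"
      by (simp add: complex_norm_square[symmetric])
    finally show "cnj (x$i) * complex_of_real (d i) * x $ i = complex_of_real (d i * (cmod (x $ i))\<^sup>2)"
      by simp
  qed
  finally show ?thesis .
qed

lemma psd_diag: assumes "\<And>i. i < n \<Longrightarrow> d i \<ge> 0"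
  shows "psd n (mat_diag n (\<lambda>i. complex_of_real (d i)))"
  unfolding psd_def hermitian_def
  using assms by (auto simp: qform_diag adj_diag Re_sum Im_sum mat_diag_dim intro!: sum_nonneg)

lemma psd_udiag: assumes U: "U \<in> carrier_mat n n" and d: "\<And>i. i < n \<Longrightarrow> d i \<ge> 0"
  shows "psd n (U * mat_diag n (\<lambda>i. complex_of_real (d i)) * adj U)"
  using psd_congr[OF psd_diag[OF d], where C="adj U"] U by simp

lemma herm_udiag: assumes U: "U \<in> carrier_mat n n"
  shows "hermitian n (U * mat_diag n (\<lambda>i. complex_of_real (d i)) * adj U)"
  using herm_congr[of n "mat_diag n (\<lambda>i. complex_of_real (d i))" "adj U"] U
  by (simp add: hermitian_def adj_diag mat_diag_dim)


lemma psd_diag_nonneg: assumes p: "psd n (mat_diag n (\<lambda>i. complex_of_real (d i)))" and i: "i < n"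
  shows "d i \<ge> 0"
proof -
  have u: "unit_vec n i \<in> carrier_vec n" by simp
  have "Re (qform (mat_diag n (\<lambda>i. complex_of_real (d i))) (unit_vec n i)) \<ge> 0"
    using p u unfolding psd_def by blast
  also have "qform (mat_diag n (\<lambda>i. complex_of_real (d i))) (unit_vec n i) = complex_of_real (d i)"
    using i by (subst qform_diag[OF u], subst sum.cong[OF refl, of _ _ "\<lambda>k. if k = i then complex_of_real (d i) else 0"]) (auto simp: unit_vec_def)
  finally show ?thesis by simp
qed

lemma udiag_unconj: assumes U: "unitary n U" and D: "D \<in> carrier_mat n n"
  shows "adj U * (U * D * adj U) * U = D"
proof -
  have Uc: "U \<in> carrier_mat n n" using U unitary_carrier by auto
  have aU: "adj U \<in> carrier_mat n n" using Uc by simp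
  have UD: "U * D \<in> carrier_mat n n" "U * D * adj U \<in> carrier_mat n n" using Uc D aU by auto
  have "adj U * (U * D * adj U) * U = adj U * (U * D * adj U * U)"
    by (rule assoc_mult_mat[OF aU UD(2) Uc])
  also have "U * D * adj U * U = U * D * (adj U * U)"
    by (rule assoc_mult_mat[OF UD(1) aU Uc])
  also have "\<dots> = U * D" using U UD(1) by (simp add: unitary_def right_mult_one_mat[of _ n n])
  also have "adj U * (U * D) = (adj U * U) * D"
    by (rule assoc_mult_mat[OF aU Uc D, symmetric])
  also have "\<dots> = D" using U D by (simp add: unitary_def)
  finally show ?thesis .
qed

lemma eig_lower: assumes U: "unitary n U" and X: "X = U * mat_diag n (\<lambda>i. complex_of_real (lam i)) * adj U"
  and le: "loewner_le n (scal_id n a) X" and i: "i < n"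
  shows "a \<le> lam i"
proof -
  have Uc: "U \<in> carrier_mat n n" using U unitary_carrier by auto
  have "X - scal_id n a = U * mat_diag n (\<lambda>i. complex_of_real (lam i)) * adj U - U * mat_diag n (\<lambda>i. complex_of_real a) * adj U"
    using udiag_const[OF U] X by (simp add: scal_id_def)
  also have "\<dots> = U * mat_diag n (\<lambda>i. complex_of_real (lam i - a)) * adj U"
    using udiag_minus[OF Uc] by simp
  finally have "psd n (U * mat_diag n (\<lambda>i. complex_of_real (lam i - a)) * adj U)"
    using le by (simp add: loewner_le_def)
  from psd_congr[OF this Uc] have "psd n (mat_diag n (\<lambda>i. complex_of_real (lam i - a)))"
    using udiag_unconj[OF U] by (simp add: mat_diag_dim)
  from psd_diag_nonneg[OF this i] show ?thesis by simp
qed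

lemma eig_upper: assumes U: "unitary n U" and X: "X = U * mat_diag n (\<lambda>i. complex_of_real (lam i)) * adj U"
  and le: "loewner_le n X (scal_id n b)" and i: "i < n"
  shows "lam i \<le> b"
proof -
  have Uc: "U \<in> carrier_mat n n" using U unitary_carrier by auto
  have "scal_id n b - X = U * mat_diag n (\<lambda>i. complex_of_real b) * adj U - U * mat_diag n (\<lambda>i. complex_of_real (lam i)) * adj U"
    using udiag_const[OF U] X by (simp add: scal_id_def)
  also have "\<dots> = U * mat_diag n (\<lambda>i. complex_of_real (b - lam i)) * adj U"
    using udiag_minus[OF Uc] by simp
  finally have "psd n (U * mat_diag n (\<lambda>i. complex_of_real (b - lam i)) * adj U)"
    using le by (simp add: loewner_le_def)
  from psd_congr[OF this Uc] have "psd n (mat_diag n (\<lambda>i. complex_of_real (b - lam i)))"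
    using udiag_unconj[OF U] by (simp add: mat_diag_dim)
  from psd_diag_nonneg[OF this i] show ?thesis by simp
qed


lemma householder:
  fixes u :: "complex vec" and r :: real
  assumes u: "u \<in> carrier_vec n" and n: "0 < n" and unit: "(\<Sum>i<n. u$i * cnj (u$i)) = 1"
    and u0: "u$0 = complex_of_real r" and r: "r \<le> 0"
  shows "\<exists>H. H \<in> carrier_mat n n \<and> adj H = H \<and> H * H = 1\<^sub>m n \<and> (\<forall>i<n. H $$ (i,0) = u $ i)"
proof -
  obtain k where nk: "n = Suc k" using n by (cases n) auto
  define w where "w = unit_vec n 0 - u"
  have w: "w \<in> carrier_vec n" using u by (simp add: w_def)
  have wi: "i < n \<Longrightarrow> w $ i = (if i = 0 then 1 else 0) - u $ i" for i
    using u by (simp add: w_def unit_vec_def)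
  define S where "S = (\<Sum>i<n. w$i * cnj (w$i))"
  have "S = w$0 * cnj (w$0) + (\<Sum>i<k. w$(Suc i) * cnj (w$(Suc i)))"
    unfolding S_def nk by (simp only: sum.lessThan_Suc_shift)
  also have "(\<Sum>i<k. w$(Suc i) * cnj (w$(Suc i))) = (\<Sum>i<k. u$(Suc i) * cnj (u$(Suc i)))"
    by (rule sum.cong) (auto simp: wi nk)
  also have "\<dots> = 1 - u$0 * cnj (u$0)"
    using unit unfolding nk by (simp only: sum.lessThan_Suc_shift) (simp add: algebra_simps)
  finally have S: "S = complex_of_real (2 - 2 * r)"
    using wi[of 0] n u0 by (simp add: algebra_simps power2_eq_square)
  have Spos: "2 - 2 * r > 0" using r by simp
  define c where "c = complex_of_real (2 / (2 - 2 * r))"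
  have "c * S = complex_of_real (2 / (2 - 2 * r) * (2 - 2 * r))" by (simp add: c_def S)
  also have "2 / (2 - 2 * r) * (2 - 2 * r) = 2" using Spos by (simp add: field_simps)
  finally have cS: "c * S = 2" by simp
  have w0: "w $ 0 = complex_of_real (1 - r)" using wi[of 0] n u0 by simp
  have "c * cnj (w $ 0) = complex_of_real (2 / (2 - 2 * r) * (1 - r))" by (simp add: c_def w0)
  also have "2 / (2 - 2 * r) * (1 - r) = 1" using Spos by (simp add: field_simps)
  finally have cw0: "c * cnj (w $ 0) = 1" by simp
  define W where "W = mat n n (\<lambda>(i,j). w$i * cnj (w$j))"
  have Wc: "W \<in> carrier_mat n n" by (simp add: W_def)
  have WW: "W * W = S \<cdot>\<^sub>m W"
    by (rule eq_matI) (auto simp: W_def S_def scalar_prod_def row_def col_def sum_distrib_left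
        sum_distrib_right atLeast0LessThan mult.commute mult.left_commute intro!: sum.cong)
  have adjW: "adj W = W" by (rule eq_matI) (auto simp: W_def)
  define H where "H = 1\<^sub>m n - c \<cdot>\<^sub>m W"
  have Hc: "H \<in> carrier_mat n n" unfolding H_def using Wc by (intro minus_carrier_mat smult_carrier_mat one_carrier_mat)
  have "adj H = 1\<^sub>m n - cnj c \<cdot>\<^sub>m W"
    unfolding H_def using Wc by (simp add: adj_minus[of _ n n] adj_smult adjW)
  also have "cnj c = c" by (simp add: c_def)
  finally have adjH: "adj H = H" unfolding H_def .
  have "H * H = 1\<^sub>m n * H - (c \<cdot>\<^sub>m W) * H"
    unfolding H_def[of ] using Wc by (subst minus_mult_distrib_mat[of _ n n]) (auto simp: H_def)
  also have "\<dots> = H - c \<cdot>\<^sub>m (W * H)" using Wc Hc by (simp add: mult_smult_assoc_mat[of _ n n])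
  also have "W * H = W - c \<cdot>\<^sub>m (W * W)"
  proof -
    have "W * H = W * 1\<^sub>m n - W * (c \<cdot>\<^sub>m W)" unfolding H_def
      by (rule mult_minus_distrib_mat[OF Wc one_carrier_mat smult_carrier_mat[OF Wc]])
    then show ?thesis using Wc by (simp add: mult_smult_distrib[OF Wc Wc])
  qed
  also have "H - c \<cdot>\<^sub>m (W - c \<cdot>\<^sub>m (W * W)) = 1\<^sub>m n"
    unfolding WW H_def
  proof (rule eq_matI)
    fix i j assume "i < dim_row (1\<^sub>m n :: complex mat)" "j < dim_col (1\<^sub>m n :: complex mat)"
    then have ij: "i < n" "j < n" by auto
    have e: "c * (c * (S * W $$ (i, j))) = (c * S) * (c * W $$ (i,j))" by (simp only: mult_ac)
    have "(1\<^sub>m n - c \<cdot>\<^sub>m W - c \<cdot>\<^sub>m (W - c \<cdot>\<^sub>m (S \<cdot>\<^sub>m W))) $$ (i, j)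
       = 1\<^sub>m n $$ (i, j) - c * W $$ (i,j) - (c * W $$ (i,j) - c * (c * (S * W $$ (i, j))))"
      using ij Wc by (simp add: right_diff_distrib)
    also have "\<dots> = 1\<^sub>m n $$ (i, j)" unfolding e cS by simp
    finally show "(1\<^sub>m n - c \<cdot>\<^sub>m W - c \<cdot>\<^sub>m (W - c \<cdot>\<^sub>m (S \<cdot>\<^sub>m W))) $$ (i, j) = 1\<^sub>m n $$ (i, j)" .
  qed (use Wc in auto)
  finally have HH: "H * H = 1\<^sub>m n" .
  have H0: "\<forall>i<n. H $$ (i,0) = u $ i"
  proof (intro allI impI)
    fix i assume i: "i < n"
    have "H $$ (i,0) = (if i = 0 then 1 else 0) - c * (w $ i * cnj (w $ 0))"
      using i n by (simp add: H_def W_def)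
    also have "\<dots> = (if i = 0 then 1 else 0) - w $ i * (c * cnj (w $ 0))" by (simp add: algebra_simps)
    also have "\<dots> = u $ i" using i by (simp only: cw0 mult_1_right) (simp add: wi)
    finally show "H $$ (i,0) = u $ i" .
  qed
  show ?thesis using Hc adjH HH H0 by blast
qed




lemma unit_eigvec:
  fixes A :: "complex mat"
  assumes A: "A \<in> carrier_mat n n" and n: "0 < n"
  shows "\<exists>e u r. u \<in> carrier_vec n \<and> A *\<^sub>v u = e \<cdot>\<^sub>v u \<and> (\<Sum>i<n. u$i * cnj (u$i)) = 1
     \<and> u$0 = complex_of_real r \<and> r \<le> 0"
proof -
  obtain as where cp: "char_poly A = (\<Prod>a\<leftarrow>as. [:- a, 1:])" and len: "length as = n"
    using char_poly_factorized[OF A] by blast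
  obtain e as' where as: "as = e # as'" using len n by (cases as) auto
  have "poly (char_poly A) e = 0" unfolding cp as by (rule linear_poly_root) simp
  then have "eigenvalue A e" using eigenvalue_root_char_poly[OF A] by simp
  then obtain v where ev: "eigenvector A v e" unfolding eigenvalue_def by blast
  have v: "v \<in> carrier_vec n" and v0: "v \<noteq> 0\<^sub>v n" and Av: "A *\<^sub>v v = e \<cdot>\<^sub>v v"
    using ev A unfolding eigenvector_def by auto
  obtain j where j: "j < n" "v $ j \<noteq> 0"
    using v v0 by (metis eq_vecI index_zero_vec(1) index_zero_vec(2) carrier_vecD)
  define s where "s = (\<Sum>i<n. (cmod (v$i))\<^sup>2)"
  have "s \<ge> (cmod (v$j))\<^sup>2" unfolding s_def
    by (rule member_le_sum) (use j in auto)
  then have spos: "s > 0" using j by (smt (verit) zero_less_norm_iff zero_less_power)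
  define \<nu> where "\<nu> = sqrt s"
  have nupos: "\<nu> > 0" using spos by (simp add: \<nu>_def)
  define \<phi> where "\<phi> = (if v $ 0 = 0 then 1 else - cnj (v$0) / complex_of_real (cmod (v$0)))"
  have phi1: "cmod \<phi> = 1" by (simp add: \<phi>_def norm_divide)
  define a where "a = \<phi> / complex_of_real \<nu>"
  have cmoda: "cmod a = 1 / \<nu>" using nupos phi1 by (simp add: a_def norm_divide)
  define u where "u = a \<cdot>\<^sub>v v"
  have u: "u \<in> carrier_vec n" using v by (simp add: u_def)
  have Au: "A *\<^sub>v u = e \<cdot>\<^sub>v u"
    unfolding u_def using A v Av by (simp add: mult_mat_vec[OF A v]) (auto simp: mult.commute mult.left_commute intro!: eq_vecI)
  have "(\<Sum>i<n. u$i * cnj (u$i)) = (\<Sum>i<n. complex_of_real ((cmod a)\<^sup>2 * (cmod (v$i))\<^sup>2))"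
  proof (rule sum.cong[OF refl])
    fix i assume "i \<in> {..<n}"
    then have "u $ i = a * v $ i" using v by (simp add: u_def)
    then have "u$i * cnj (u$i) = (a * cnj a) * (v$i * cnj (v$i))" by (simp add: mult_ac)
    then show "u$i * cnj (u$i) = complex_of_real ((cmod a)\<^sup>2 * (cmod (v$i))\<^sup>2)"
      by (simp add: complex_norm_square[symmetric])
  qed
  also have "\<dots> = complex_of_real ((cmod a)\<^sup>2 * s)" by (simp add: s_def sum_distrib_left)
  also have "(cmod a)\<^sup>2 * s = 1" using spos nupos by (simp add: cmoda \<nu>_def power_divide)
  finally have unit: "(\<Sum>i<n. u$i * cnj (u$i)) = 1" by simp
  define r where "r = (if v $ 0 = 0 then 0 else - cmod (v$0) / \<nu>)"
  have r: "r \<le> 0" using nupos by (simp add: r_def)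
  have u0: "u $ 0 = complex_of_real r"
  proof (cases "v $ 0 = 0")
    case True then show ?thesis using v n by (simp add: u_def r_def)
  next
    case False
    have "u $ 0 = - (cnj (v$0) * v$0) / (complex_of_real (cmod (v$0)) * complex_of_real \<nu>)"
      using v n False by (simp add: u_def a_def \<phi>_def)
    also have "cnj (v$0) * v$0 = complex_of_real ((cmod (v$0))\<^sup>2)"
      by (simp add: complex_norm_square[symmetric] mult.commute)
    finally show ?thesis using False nupos by (simp add: r_def power2_eq_square)
  qed
  show ?thesis using u Au unit u0 r by blast
qed

lemma mult_adj_index: assumes "X \<in> carrier_mat p q" "Y \<in> carrier_mat r q" "a < p" "b < r"
  shows "(X * adj Y) $$ (a,b) = (\<Sum>l<q. X $$ (a,l) * cnj (Y $$ (b,l)))"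
  using assms by (auto simp: scalar_prod_def row_def col_def atLeast0LessThan intro!: sum.cong)

lemma adj_mult_index: assumes "X \<in> carrier_mat p q" "Y \<in> carrier_mat p r" "a < q" "b < r"
  shows "(adj X * Y) $$ (a,b) = (\<Sum>l<p. cnj (X $$ (l,a)) * Y $$ (l,b))"
  using assms by (auto simp: scalar_prod_def row_def col_def atLeast0LessThan intro!: sum.cong)

lemma unitary_mult: assumes P: "unitary n P" and Q: "unitary n Q" shows "unitary n (P * Q)"
proof -
  have Pc: "P \<in> carrier_mat n n" and Qc: "Q \<in> carrier_mat n n" using P Q by (auto simp: unitary_def)
  have aP: "adj P \<in> carrier_mat n n" and aQ: "adj Q \<in> carrier_mat n n" using Pc Qc by auto
  have adjPQ: "adj (P * Q) = adj Q * adj P" by (rule adj_mult[OF Pc Qc])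
  have "P * Q * (adj Q * adj P) = P * (Q * (adj Q * adj P))" using assoc_mult_mat[OF Pc Qc mult_carrier_mat[OF aQ aP]] .
  also have "Q * (adj Q * adj P) = (Q * adj Q) * adj P" by (rule assoc_mult_mat[OF Qc aQ aP, symmetric])
  also have "\<dots> = adj P" using Q aP by (simp add: unitary_def left_mult_one_mat[OF aP])
  also have "P * adj P = 1\<^sub>m n" using P by (simp add: unitary_def)
  finally have 1: "P * Q * adj (P * Q) = 1\<^sub>m n" unfolding adjPQ .
  have "adj Q * adj P * (P * Q) = adj Q * (adj P * (P * Q))" using assoc_mult_mat[OF aQ aP mult_carrier_mat[OF Pc Qc]] .
  also have "adj P * (P * Q) = (adj P * P) * Q" by (rule assoc_mult_mat[OF aP Pc Qc, symmetric])
  also have "\<dots> = Q" using P Qc by (simp add: unitary_def left_mult_one_mat[OF Qc])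
  also have "adj Q * Q = 1\<^sub>m n" using Q by (simp add: unitary_def)
  finally have 2: "adj (P * Q) * (P * Q) = 1\<^sub>m n" unfolding adjPQ .
  show ?thesis using 1 2 Pc Qc by (auto simp: unitary_def)
qed

lemma assoc_5: assumes c: "P \<in> carrier_mat n n" "Q \<in> carrier_mat n n" "R \<in> carrier_mat n n" "S \<in> carrier_mat n n" "T \<in> carrier_mat n n"
  shows "P * (Q * R * S) * T = (P * Q) * R * (S * T)"
proof -
  have "P * (Q * R * S) * T = P * ((Q * R) * (S * T))"
    using c by (simp add: assoc_mult_mat[of _ n n _ n _ n])
  also have "\<dots> = (P * (Q * R)) * (S * T)"
    using c by (simp add: assoc_mult_mat[of _ n n _ n _ n])
  also have "\<dots> = (P * Q) * R * (S * T)"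
    using c by (simp add: assoc_mult_mat[of _ n n _ n _ n])
  finally show ?thesis .
qed

lemma spectral:
  "hermitian n A \<Longrightarrow> \<exists>U lam. unitary n U \<and> A = U * mat_diag n (\<lambda>i. complex_of_real (lam i)) * adj U"
proof (induction n arbitrary: A)
  case 0
  have Ac: "A \<in> carrier_mat 0 0" using 0 by (simp add: hermitian_def)
  have "unitary 0 (1\<^sub>m 0)" by (simp add: unitary_def)
  moreover have "A = 1\<^sub>m 0 * mat_diag 0 (\<lambda>i. complex_of_real 0) * adj (1\<^sub>m 0)"
    by (rule eq_matI) (use Ac in auto)
  ultimately show ?case by (intro exI[of _ "1\<^sub>m 0"] exI[of _ "\<lambda>i. 0::real"]) simp
next
  case (Suc k)
  define n where "n = Suc k"
  have Ac: "A \<in> carrier_mat n n" using Suc.prems by (simp add: hermitian_def n_def)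
  have n: "0 < n" by (simp add: n_def)
  obtain e u r where u: "u \<in> carrier_vec n" and Au: "A *\<^sub>v u = e \<cdot>\<^sub>v u"
    and unit: "(\<Sum>i<n. u$i * cnj (u$i)) = 1" and u0: "u$0 = complex_of_real r" and r: "r \<le> 0"
    using unit_eigvec[OF Ac n] by blast
  obtain H where Hc: "H \<in> carrier_mat n n" and adjH: "adj H = H" and HH: "H * H = 1\<^sub>m n"
    and H0: "\<forall>i<n. H $$ (i,0) = u $ i"
    using householder[OF u n unit u0 r] by blast
  have colH: "col H 0 = u" using Hc u H0 by (intro eq_vecI) auto
  have Hu: "H *\<^sub>v u = unit_vec n 0"
    using col_mult2[OF Hc Hc n, symmetric] colH HH n by (simp add: col_one)
  define A' where "A' = H * A * H"
  have hermA': "hermitian n A'"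
    using herm_congr[OF Suc.prems[folded n_def] Hc] adjH by (simp add: A'_def)
  have A'c: "A' \<in> carrier_mat n n" using Hc Ac by (simp add: A'_def)
  have "col A' 0 = (H * A) *\<^sub>v col H 0"
    unfolding A'_def by (rule col_mult2[OF _ Hc n]) (use Hc Ac in auto)
  also have "\<dots> = H *\<^sub>v (A *\<^sub>v u)" using Hc Ac u colH by (simp add: assoc_mult_mat_vec[of _ n n _ n])
  also have "\<dots> = e \<cdot>\<^sub>v unit_vec n 0" using Au Hc u Hu by (simp add: mult_mat_vec[OF Hc u])
  finally have colA': "col A' 0 = e \<cdot>\<^sub>v unit_vec n 0" .
  have A'0: "A' $$ (i,0) = (if i = 0 then e else 0)" if "i < n" for i
  proof -
    have "A' $$ (i,0) = col A' 0 $ i" using that A'c by simp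
    then show ?thesis using that by (simp add: colA')
  qed
  have A'row: "A' $$ (0,j) = cnj (A' $$ (j,0))" if "j < n" for j
  proof -
    have "A' $$ (0,j) = adj A' $$ (0,j)" using hermA' by (simp add: hermitian_def)
    also have "\<dots> = cnj (A' $$ (j,0))" using that n A'c by simp
    finally show ?thesis .
  qed
  have "e = cnj e" using A'row[OF n] A'0[OF n] by simp
  then have ereal: "e = complex_of_real (Re e)" by (simp add: complex_eq_iff)
  define A3 where "A3 = mat k k (\<lambda>(i,j). A' $$ (Suc i, Suc j))"
  have hermA3: "hermitian k A3"
  proof -
    have "adj A3 = A3"
    proof (rule eq_matI)
      fix i j assume "i < dim_row A3" "j < dim_col A3"
      then have ij: "i < k" "j < k" by (auto simp: A3_def)
      have "adj A3 $$ (i,j) = cnj (A' $$ (Suc j, Suc i))" using ij by (simp add: A3_def)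
      also have "\<dots> = adj A' $$ (Suc i, Suc j)" using ij A'c by (simp add: n_def)
      also have "\<dots> = A3 $$ (i,j)" using ij hermA' by (simp add: hermitian_def A3_def)
      finally show "adj A3 $$ (i,j) = A3 $$ (i,j)" .
    qed (auto simp: A3_def)
    then show ?thesis by (simp add: hermitian_def A3_def)
  qed
  obtain U3 lam3 where U3: "unitary k U3" and A3eq: "A3 = U3 * mat_diag k (\<lambda>i. complex_of_real (lam3 i)) * adj U3"
    using Suc.IH[OF hermA3] by blast
  have U3c: "U3 \<in> carrier_mat k k" using U3 by (simp add: unitary_def)
  define E where "E = mat n n (\<lambda>(i,j). if i = 0 \<and> j = 0 then 1 else if i = 0 \<or> j = 0 then 0 else U3 $$ (i - 1, j - 1))"
  define lam where "lam = (\<lambda>i. if i = 0 then Re e else lam3 (i - 1))"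
  have Ec: "E \<in> carrier_mat n n" by (simp add: E_def)
  have E00: "E $$ (0,0) = 1" by (simp add: E_def n_def)
  have E0S: "j < k \<Longrightarrow> E $$ (0, Suc j) = 0" for j by (simp add: E_def n_def)
  have ES0: "i < k \<Longrightarrow> E $$ (Suc i, 0) = 0" for i by (simp add: E_def n_def)
  have ESS: "i < k \<Longrightarrow> j < k \<Longrightarrow> E $$ (Suc i, Suc j) = U3 $$ (i, j)" for i j by (simp add: E_def n_def)
  have split: "(\<Sum>l<n. f l) = f 0 + (\<Sum>l<k. f (Suc l))" for f :: "nat \<Rightarrow> complex"
    unfolding n_def by (simp only: sum.lessThan_Suc_shift)
  have EadjE: "E * adj E = 1\<^sub>m n"
  proof (rule eq_matI)
    fix i j assume "i < dim_row (1\<^sub>m n :: complex mat)" "j < dim_col (1\<^sub>m n :: complex mat)"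
    then have ij: "i < n" "j < n" by auto
    have "(E * adj E) $$ (i,j) = (\<Sum>l<n. E $$ (i,l) * cnj (E $$ (j,l)))"
      by (rule mult_adj_index[OF Ec Ec ij])
    also have "\<dots> = E $$ (i,0) * cnj (E $$ (j,0)) + (\<Sum>l<k. E $$ (i,Suc l) * cnj (E $$ (j,Suc l)))"
      by (rule split)
    also have "\<dots> = 1\<^sub>m n $$ (i,j)"
    proof (cases i)
      case 0
      then show ?thesis using ij by (cases j) (auto simp: E00 E0S ES0 n_def)
    next
      case (Suc i')
      show ?thesis
      proof (cases j)
        case 0 then show ?thesis using ij Suc by (auto simp: E00 E0S ES0 n_def)
      next
        case (Suc j')
        have "(\<Sum>l<k. E $$ (i,Suc l) * cnj (E $$ (j,Suc l))) = (\<Sum>l<k. U3 $$ (i',l) * cnj (U3 $$ (j',l)))"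
          using ij \<open>i = Suc i'\<close> Suc by (intro sum.cong) (auto simp: ESS n_def)
        also have "\<dots> = (U3 * adj U3) $$ (i',j')"
          using ij \<open>i = Suc i'\<close> Suc by (intro mult_adj_index[OF U3c U3c, symmetric]) (auto simp: n_def)
        also have "\<dots> = 1\<^sub>m k $$ (i',j')" using U3 by (simp add: unitary_def)
        finally show ?thesis using ij \<open>i = Suc i'\<close> Suc by (auto simp: ES0 n_def)
      qed
    qed
    finally show "(E * adj E) $$ (i,j) = 1\<^sub>m n $$ (i,j)" .
  qed (use Ec in auto)
  have adjEE: "adj E * E = 1\<^sub>m n"
  proof (rule eq_matI)
    fix i j assume "i < dim_row (1\<^sub>m n :: complex mat)" "j < dim_col (1\<^sub>m n :: complex mat)"
    then have ij: "i < n" "j < n" by auto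
    have "(adj E * E) $$ (i,j) = (\<Sum>l<n. cnj (E $$ (l,i)) * E $$ (l,j))"
      by (rule adj_mult_index[OF Ec Ec ij])
    also have "\<dots> = cnj (E $$ (0,i)) * E $$ (0,j) + (\<Sum>l<k. cnj (E $$ (Suc l,i)) * E $$ (Suc l,j))"
      by (rule split)
    also have "\<dots> = 1\<^sub>m n $$ (i,j)"
    proof (cases i)
      case 0
      then show ?thesis using ij by (cases j) (auto simp: E00 E0S ES0 n_def)
    next
      case (Suc i')
      show ?thesis
      proof (cases j)
        case 0 then show ?thesis using ij Suc by (auto simp: E00 E0S ES0 n_def)
      next
        case (Suc j')
        have "(\<Sum>l<k. cnj (E $$ (Suc l,i)) * E $$ (Suc l,j)) = (\<Sum>l<k. cnj (U3 $$ (l,i')) * U3 $$ (l,j'))"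
          using ij \<open>i = Suc i'\<close> Suc by (intro sum.cong) (auto simp: ESS n_def)
        also have "\<dots> = (adj U3 * U3) $$ (i',j')"
          using ij \<open>i = Suc i'\<close> Suc by (intro adj_mult_index[OF U3c U3c, symmetric]) (auto simp: n_def)
        also have "\<dots> = 1\<^sub>m k $$ (i',j')" using U3 by (simp add: unitary_def)
        finally show ?thesis using ij \<open>i = Suc i'\<close> Suc by (auto simp: E0S n_def)
      qed
    qed
    finally show "(adj E * E) $$ (i,j) = 1\<^sub>m n $$ (i,j)" .
  qed (use Ec in auto)
  have Eu: "unitary n E" using Ec EadjE adjEE by (simp add: unitary_def)
  define D where "D = mat_diag n (\<lambda>i. complex_of_real (lam i))"
  have Dc: "D \<in> carrier_mat n n" by (simp add: D_def mat_diag_dim)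
  have A'eq: "A' = E * D * adj E"
  proof (rule eq_matI)
    fix i j assume "i < dim_row (E * D * adj E)" "j < dim_col (E * D * adj E)"
    then have ij: "i < n" "j < n" using Ec by auto
    have "(E * D * adj E) $$ (i,j) = (\<Sum>l<n. E $$ (i,l) * complex_of_real (lam l) * cnj (E $$ (j,l)))"
      unfolding D_def by (rule udiag_index[OF Ec ij])
    also have "\<dots> = E $$ (i,0) * complex_of_real (lam 0) * cnj (E $$ (j,0))
        + (\<Sum>l<k. E $$ (i,Suc l) * complex_of_real (lam (Suc l)) * cnj (E $$ (j,Suc l)))"
      by (rule split)
    also have "\<dots> = A' $$ (i,j)"
    proof (cases i)
      case 0
      show ?thesis
      proof (cases j)
        case 0 then show ?thesis using \<open>i = 0\<close> ereal n by (simp add: E00 lam_def A'0 E0S)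
      next
        case (Suc j') then show ?thesis using \<open>i = 0\<close> ij
          by (simp add: E00 E0S ES0 n_def A'row A'0)
      qed
    next
      case (Suc i')
      show ?thesis
      proof (cases j)
        case 0 then show ?thesis using ij Suc by (simp add: E00 E0S ES0 n_def A'0)
      next
        case (Suc j')
        have "(\<Sum>l<k. E $$ (i,Suc l) * complex_of_real (lam (Suc l)) * cnj (E $$ (j,Suc l)))
            = (\<Sum>l<k. U3 $$ (i',l) * complex_of_real (lam3 l) * cnj (U3 $$ (j',l)))"
          using ij \<open>i = Suc i'\<close> Suc by (intro sum.cong) (auto simp: ESS n_def lam_def)
        also have "\<dots> = A3 $$ (i',j')"
          using ij \<open>i = Suc i'\<close> Suc A3eq udiag_index[OF U3c, of i' j'] by (simp add: n_def)
        also have "\<dots> = A' $$ (i,j)" using ij \<open>i = Suc i'\<close> Suc by (simp add: A3_def n_def)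
        finally show ?thesis using ij \<open>i = Suc i'\<close> Suc by (simp add: ES0 n_def)
      qed
    qed
    finally show "A' $$ (i,j) = (E * D * adj E) $$ (i,j)" by simp
  qed (use Ec A'c in auto)
  have Hu2: "unitary n H" using Hc adjH HH by (simp add: unitary_def)
  have aE: "adj E \<in> carrier_mat n n" using Ec by simp
  have "A = (H * H) * A * (H * H)" using HH Ac by simp
  also have "\<dots> = H * A' * H" unfolding A'_def using assoc_5[OF Hc Hc Ac Hc Hc] by simp
  also have "\<dots> = (H * E) * D * (adj E * H)" unfolding A'eq using assoc_5[OF Hc Ec Dc aE Hc] .
  also have "adj E * H = adj (H * E)" using adj_mult[OF Hc Ec] adjH by simp
  finally have "A = (H * E) * D * adj (H * E)" .
  then have "unitary n (H * E) \<and> A = (H * E) * mat_diag n (\<lambda>i. complex_of_real (lam i)) * adj (H * E)"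
    using unitary_mult[OF Hu2 Eu] by (simp add: D_def)
  then show ?case unfolding n_def by blast
qed

lemma matfun_spec:
  assumes h: "hermitian n X" and sp: "spec_in n a b X"
  shows "\<exists>U lam. unitary n U \<and> (\<forall>i<n. a \<le> lam i \<and> lam i \<le> b)
     \<and> X = U * mat_diag n (\<lambda>i. complex_of_real (lam i)) * adj U
     \<and> mat_fun n f X = U * mat_diag n (\<lambda>i. complex_of_real (f (lam i))) * adj U"
proof -
  obtain U lam where "unitary n U" "X = U * mat_diag n (\<lambda>i. complex_of_real (lam i)) * adj U"
    using spectral[OF h] by blast
  then have ex: "\<exists>B. \<exists>U lam. unitary n U \<and> X = U * mat_diag n (\<lambda>i. complex_of_real (lam i)) * adj U \<and>
       B = U * mat_diag n (\<lambda>i. complex_of_real (f (lam i))) * adj U" by blast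
  obtain U' lam' where U': "unitary n U'" and X': "X = U' * mat_diag n (\<lambda>i. complex_of_real (lam' i)) * adj U'"
    and F: "mat_fun n f X = U' * mat_diag n (\<lambda>i. complex_of_real (f (lam' i))) * adj U'"
    using someI_ex[OF ex] unfolding mat_fun_def by blast
  have "\<forall>i<n. a \<le> lam' i \<and> lam' i \<le> b"
    using eig_lower[OF U' X'] eig_upper[OF U' X'] sp by (auto simp: spec_in_def)
  then show ?thesis using U' X' F by blast
qed

lemma matfun_lower:
  assumes h: "hermitian n X" and sp: "spec_in n a b X" and le: "\<And>x. a \<le> x \<Longrightarrow> x \<le> b \<Longrightarrow> c * x \<le> f x"
  shows "loewner_le n (complex_of_real c \<cdot>\<^sub>m X) (mat_fun n f X)"
proof -
  obtain U lam where U: "unitary n U" and b: "\<forall>i<n. a \<le> lam i \<and> lam i \<le> b"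
    and X: "X = U * mat_diag n (\<lambda>i. complex_of_real (lam i)) * adj U"
    and F: "mat_fun n f X = U * mat_diag n (\<lambda>i. complex_of_real (f (lam i))) * adj U"
    using matfun_spec[OF h sp] by blast
  have Uc: "U \<in> carrier_mat n n" using U unitary_carrier by auto
  have cX: "complex_of_real c \<cdot>\<^sub>m X = U * mat_diag n (\<lambda>i. complex_of_real (c * lam i)) * adj U"
    unfolding X udiag_smult[OF Uc] by simp
  have "mat_fun n f X - complex_of_real c \<cdot>\<^sub>m X = U * mat_diag n (\<lambda>i. complex_of_real (f (lam i) - c * lam i)) * adj U"
    unfolding F cX udiag_minus[OF Uc] by simp
  moreover have "psd n (U * mat_diag n (\<lambda>i. complex_of_real (f (lam i) - c * lam i)) * adj U)"
    by (rule psd_udiag[OF Uc]) (use b le in auto)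
  moreover have "hermitian n (complex_of_real c \<cdot>\<^sub>m X)" "hermitian n (mat_fun n f X)"
    unfolding cX F by (rule herm_udiag[OF Uc])+
  ultimately show ?thesis unfolding loewner_le_def by simp
qed

lemma matfun_upper:
  assumes h: "hermitian n X" and sp: "spec_in n a b X" and le: "\<And>x. a \<le> x \<Longrightarrow> x \<le> b \<Longrightarrow> f x \<le> c * x"
  shows "loewner_le n (mat_fun n f X) (complex_of_real c \<cdot>\<^sub>m X)"
proof -
  obtain U lam where U: "unitary n U" and b: "\<forall>i<n. a \<le> lam i \<and> lam i \<le> b"
    and X: "X = U * mat_diag n (\<lambda>i. complex_of_real (lam i)) * adj U"
    and F: "mat_fun n f X = U * mat_diag n (\<lambda>i. complex_of_real (f (lam i))) * adj U"
    using matfun_spec[OF h sp] by blast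
  have Uc: "U \<in> carrier_mat n n" using U unitary_carrier by auto
  have cX: "complex_of_real c \<cdot>\<^sub>m X = U * mat_diag n (\<lambda>i. complex_of_real (c * lam i)) * adj U"
    unfolding X udiag_smult[OF Uc] by simp
  have "complex_of_real c \<cdot>\<^sub>m X - mat_fun n f X = U * mat_diag n (\<lambda>i. complex_of_real (c * lam i - f (lam i))) * adj U"
    unfolding F cX udiag_minus[OF Uc] by simp
  moreover have "psd n (U * mat_diag n (\<lambda>i. complex_of_real (c * lam i - f (lam i))) * adj U)"
    by (rule psd_udiag[OF Uc]) (use b le in auto)
  moreover have "hermitian n (complex_of_real c \<cdot>\<^sub>m X)" "hermitian n (mat_fun n f X)"
    unfolding cX F by (rule herm_udiag[OF Uc])+
  ultimately show ?thesis unfolding loewner_le_def by simp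
qed

lemma matfun_psd:
  assumes h: "hermitian n X" and sp: "spec_in n a b X" and nn: "\<And>x. a \<le> x \<Longrightarrow> x \<le> b \<Longrightarrow> 0 \<le> f x"
  shows "psd n (mat_fun n f X)"
proof -
  obtain U lam where U: "unitary n U" and b: "\<forall>i<n. a \<le> lam i \<and> lam i \<le> b"
    and F: "mat_fun n f X = U * mat_diag n (\<lambda>i. complex_of_real (f (lam i))) * adj U"
    using matfun_spec[OF h sp] by blast
  have Uc: "U \<in> carrier_mat n n" using U unitary_carrier by auto
  show ?thesis unfolding F by (rule psd_udiag[OF Uc]) (use b nn in auto)
qed

lemma smult_smult_mat': "a \<cdot>\<^sub>m (b \<cdot>\<^sub>m A) = (a * b) \<cdot>\<^sub>m (A :: complex mat)"
  by (rule eq_matI) auto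
lemma smult_zero_mat': "A \<in> carrier_mat n n \<Longrightarrow> (0::complex) \<cdot>\<^sub>m A = 0\<^sub>m n n"
  by (rule eq_matI) auto

lemma scal_conj: assumes X: "X \<in> carrier_mat n n"
  shows "adj (complex_of_real s \<cdot>\<^sub>m 1\<^sub>m n) * X * (complex_of_real s \<cdot>\<^sub>m 1\<^sub>m n) = complex_of_real (s * s) \<cdot>\<^sub>m X"
proof -
  have a: "adj (complex_of_real s \<cdot>\<^sub>m 1\<^sub>m n) = complex_of_real s \<cdot>\<^sub>m 1\<^sub>m n" by (simp add: adj_smult)
  have "(complex_of_real s \<cdot>\<^sub>m 1\<^sub>m n) * X = complex_of_real s \<cdot>\<^sub>m (1\<^sub>m n * X)"
    by (rule mult_smult_assoc_mat[OF one_carrier_mat X])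
  also have "\<dots> = complex_of_real s \<cdot>\<^sub>m X" using X by simp
  finally have 1: "(complex_of_real s \<cdot>\<^sub>m 1\<^sub>m n) * X = complex_of_real s \<cdot>\<^sub>m X" .
  have "(complex_of_real s \<cdot>\<^sub>m X) * (complex_of_real s \<cdot>\<^sub>m 1\<^sub>m n) = complex_of_real s \<cdot>\<^sub>m (X * (complex_of_real s \<cdot>\<^sub>m 1\<^sub>m n))"
    by (rule mult_smult_assoc_mat[OF X smult_carrier_mat[OF one_carrier_mat]])
  also have "X * (complex_of_real s \<cdot>\<^sub>m 1\<^sub>m n) = complex_of_real s \<cdot>\<^sub>m (X * 1\<^sub>m n)"
    by (rule mult_smult_distrib[OF X one_carrier_mat])
  also have "X * 1\<^sub>m n = X" using X by simp
  finally show ?thesis unfolding a 1 by (simp add: smult_smult_mat')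
qed

context
  fixes n :: nat and sigma :: "complex mat \<Rightarrow> complex mat \<Rightarrow> complex mat"
  assumes mean: "matrix_mean n sigma"
begin

lemma mean_psd: "psd n A \<Longrightarrow> psd n B \<Longrightarrow> psd n (sigma A B)"
  using mean by (simp add: matrix_mean_def)
lemma mean_mono: "psd n A \<Longrightarrow> psd n B \<Longrightarrow> psd n C \<Longrightarrow> psd n D \<Longrightarrow> loewner_le n A C \<Longrightarrow> loewner_le n B D
   \<Longrightarrow> loewner_le n (sigma A B) (sigma C D)"
  using mean unfolding matrix_mean_def by blast
lemma mean_congr: "psd n A \<Longrightarrow> psd n B \<Longrightarrow> C \<in> carrier_mat n n \<Longrightarrow>
   loewner_le n (adj C * sigma A B * C) (sigma (adj C * A * C) (adj C * B * C))"
  using mean unfolding matrix_mean_def by blast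
lemma mean_one: "sigma (1\<^sub>m n) (1\<^sub>m n) = 1\<^sub>m n"
  using mean unfolding matrix_mean_def by blast

lemma mean_scal: assumes A: "psd n A" and B: "psd n B" and s: "s \<noteq> 0"
  shows "loewner_le n (complex_of_real (s * s) \<cdot>\<^sub>m sigma A B)
     (sigma (complex_of_real (s * s) \<cdot>\<^sub>m A) (complex_of_real (s * s) \<cdot>\<^sub>m B))"
  using mean_congr[OF A B, of "complex_of_real s \<cdot>\<^sub>m 1\<^sub>m n"]
  using scal_conj[OF psd_carrier[OF mean_psd[OF A B]], of s] scal_conj[OF psd_carrier[OF A], of s]
    scal_conj[OF psd_carrier[OF B], of s]
  by simp

lemma homog_lower: assumes A: "psd n A" and B: "psd n B" and c: "c \<ge> 0"
  shows "loewner_le n (complex_of_real c \<cdot>\<^sub>m sigma A B) (sigma (complex_of_real c \<cdot>\<^sub>m A) (complex_of_real c \<cdot>\<^sub>m B))"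
proof (cases "c = 0")
  case True
  have "complex_of_real c \<cdot>\<^sub>m sigma A B = 0\<^sub>m n n"
    using True smult_zero_mat'[OF psd_carrier[OF mean_psd[OF A B]]] by simp
  then show ?thesis using loewner_zero_left mean_psd psd_smult A B c by metis
next
  case False
  then have s: "sqrt c \<noteq> 0" and ss: "sqrt c * sqrt c = c" using c by auto
  show ?thesis using mean_scal[OF A B s] unfolding ss .
qed

lemma homog_upper: assumes A: "psd n A" and B: "psd n B" and c: "c \<ge> 0"
  shows "loewner_le n (sigma (complex_of_real c \<cdot>\<^sub>m A) (complex_of_real c \<cdot>\<^sub>m B)) (complex_of_real c \<cdot>\<^sub>m sigma A B)"
proof (cases "c = 0")
  case True
  have Ac: "A \<in> carrier_mat n n" and Bc: "B \<in> carrier_mat n n" using A B psd_carrier by auto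
  have z: "complex_of_real c \<cdot>\<^sub>m A = 0\<^sub>m n n" "complex_of_real c \<cdot>\<^sub>m B = 0\<^sub>m n n"
    "complex_of_real c \<cdot>\<^sub>m sigma A B = 0\<^sub>m n n"
    using True smult_zero_mat'[OF Ac] smult_zero_mat'[OF Bc] smult_zero_mat'[OF psd_carrier[OF mean_psd[OF A B]]] by auto
  define Z where "Z = sigma (0\<^sub>m n n) (0\<^sub>m n n)"
  have Zp: "psd n Z" unfolding Z_def by (rule mean_psd) (rule psd_zero)+
  have Zc: "Z \<in> carrier_mat n n" using psd_carrier[OF Zp] .
  have s2: "sqrt 2 \<noteq> 0" "sqrt 2 * sqrt 2 = (2::real)" by auto
  have "loewner_le n (complex_of_real 2 \<cdot>\<^sub>m Z) Z"
    using mean_scal[OF psd_zero psd_zero s2(1)] unfolding s2(2) Z_def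
    using smult_zero_mat'[of "0\<^sub>m n n" n] by (simp add: zero_carrier_mat)
  then have p: "psd n (Z - complex_of_real 2 \<cdot>\<^sub>m Z)" by (simp add: loewner_le_def)
  have "Z - complex_of_real 2 \<cdot>\<^sub>m Z = 0\<^sub>m n n - Z"
    by (rule eq_matI) (use Zc in auto)
  then show ?thesis unfolding z Z_def[symmetric] loewner_le_def
    using p Zp psd_zero by (auto simp: psd_def)
next
  case False
  define s where "s = 1 / sqrt c"
  have s: "s \<noteq> 0" and ss: "s * s * c = 1" using c False by (auto simp: s_def)
  have cA: "psd n (complex_of_real c \<cdot>\<^sub>m A)" "psd n (complex_of_real c \<cdot>\<^sub>m B)"
    using psd_smult A B c by auto
  have Ac: "A \<in> carrier_mat n n" and Bc: "B \<in> carrier_mat n n" using A B psd_carrier by auto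
  have e: "complex_of_real (s * s) \<cdot>\<^sub>m (complex_of_real c \<cdot>\<^sub>m X) = X" if "X \<in> carrier_mat n n" for X
  proof -
    have "complex_of_real (s * s) \<cdot>\<^sub>m (complex_of_real c \<cdot>\<^sub>m X) = complex_of_real (s * s * c) \<cdot>\<^sub>m X"
      by (simp add: smult_smult_mat')
    also have "\<dots> = X" using that ss by (intro eq_matI) auto
    finally show ?thesis .
  qed
  have L: "loewner_le n (complex_of_real (s * s) \<cdot>\<^sub>m sigma (complex_of_real c \<cdot>\<^sub>m A) (complex_of_real c \<cdot>\<^sub>m B)) (sigma A B)"
    using mean_scal[OF cA s] e[OF Ac] e[OF Bc] by simp
  have e2: "complex_of_real c \<cdot>\<^sub>m (complex_of_real (s * s) \<cdot>\<^sub>m X) = X" if "X \<in> carrier_mat n n" for X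
  proof -
    have "complex_of_real c \<cdot>\<^sub>m (complex_of_real (s * s) \<cdot>\<^sub>m X) = complex_of_real (s * s * c) \<cdot>\<^sub>m X"
      by (simp add: smult_smult_mat' mult_ac)
    also have "\<dots> = X" using that ss by (intro eq_matI) auto
    finally show ?thesis .
  qed
  from loewner_smult[OF L c] show ?thesis
    unfolding e2[OF psd_carrier[OF mean_psd[OF cA]]] .
qed
end
lemma cvx_chord0:
  fixes g :: "real \<Rightarrow> real"
  assumes cv: "convex_on {0..} g" and g0: "g 0 = 0" and y: "0 \<le> y" "y \<le> x" and x: "0 < x"
  shows "g y \<le> (y / x) * g x"
proof -
  define t where "t = y / x"
  have t: "0 \<le> t" "t \<le> 1" using y x by (auto simp: t_def field_simps)
  have "g ((1 - t) *\<^sub>R 0 + t *\<^sub>R x) \<le> (1 - t) * g 0 + t * g x"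
    by (rule convex_onD[OF cv t]) (use x in auto)
  moreover have "(1 - t) *\<^sub>R 0 + t *\<^sub>R x = y" using x by (simp add: t_def)
  ultimately show ?thesis using g0 by (simp add: t_def)
qed

lemma cvx_S1:
  fixes g g' :: "real \<Rightarrow> real"
  assumes cv: "convex_on {0..} g" and g0: "g 0 = 0" and m: "0 < m"
    and d: "(g has_real_derivative g' 0) (at 0 within {0..})"
  shows "g' 0 \<le> g m / m"
proof -
  have lim: "((\<lambda>y. (g y - g 0) / (y - 0)) \<longlongrightarrow> g' 0) (at 0 within {0..})"
    using d by (simp add: has_field_derivative_iff)
  have ev: "eventually (\<lambda>y. (g y - g 0) / (y - 0) \<le> g m / m) (at 0 within {0..})"
    unfolding eventually_at
  proof (intro exI[of _ m] conjI ballI impI)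
    show "0 < m" by fact
    fix y :: real assume "y \<in> {0..}" and "y \<noteq> 0 \<and> dist y 0 < m"
    then have y: "0 < y" "y \<le> m" by (auto simp: dist_real_def)
    have "g y \<le> (y / m) * g m" using cvx_chord0[OF cv g0 _ _ m, of y] y by simp
    then show "(g y - g 0) / (y - 0) \<le> g m / m" using y g0 by (simp add: field_simps)
  qed
  show ?thesis
    by (rule tendsto_upperbound[OF lim ev]) (simp add: at_within_Ici_at_right)
qed

lemma cvx_S2:
  fixes g g' :: "real \<Rightarrow> real"
  assumes cv: "convex_on {0..} g" and g0: "g 0 = 0" and M: "0 < M"
    and d: "(g has_real_derivative g' M) (at M within {0..})"
  shows "g M / M \<le> g' M"
proof -
  have lim: "((\<lambda>y. (g y - g M) / (y - M)) \<longlongrightarrow> g' M) (at M within {0..})"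
    using d by (simp add: has_field_derivative_iff)
  have ev: "eventually (\<lambda>y. g M / M \<le> (g y - g M) / (y - M)) (at M within {0..})"
    unfolding eventually_at
  proof (intro exI[of _ M] conjI ballI impI)
    show "0 < M" by fact
    fix y :: real assume "y \<in> {0..}" and "y \<noteq> M \<and> dist y M < M"
    then have y: "0 < y" "y \<noteq> M" by (auto simp: dist_real_def)
    show "g M / M \<le> (g y - g M) / (y - M)"
    proof (cases "y < M")
      case True
      have "g y \<le> (y / M) * g M" using cvx_chord0[OF cv g0 _ _ M, of y] y True by simp
      then have "g y - g M \<le> (y - M) * (g M / M)" using M by (simp add: field_simps)
      then show ?thesis using True by (simp add: le_divide_eq mult.commute)
    next
      case False
      then have yM: "M < y" using y by simp
      have "g M \<le> (M / y) * g y" using cvx_chord0[OF cv g0 _ _ y(1), of M] M yM by simp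
      then have "(y - M) * (g M / M) \<le> g y - g M" using M yM by (simp add: field_simps)
      then show ?thesis using yM by (simp add: divide_le_eq le_divide_eq mult.commute)
    qed
  qed
  have nb: "at M within {0..} \<noteq> bot"
  proof
    assume b: "at M within {0..} = bot"
    have "at M within {M..} \<le> at M within {0..}" by (rule at_le) (use M in auto)
    then have "at M within {M..} = bot" using b by (simp add: le_bot)
    then show False by (simp add: at_within_Ici_at_right)
  qed
  show ?thesis by (rule tendsto_lowerbound[OF lim ev nb])
qed

lemma cvx_S3:
  fixes g :: "real \<Rightarrow> real"
  assumes cv: "convex_on {0..} g" and g0: "g 0 = 0" and m: "0 < m" and x: "m \<le> x"
  shows "g m / m * x \<le> g x"
proof -
  have "g m \<le> (m / x) * g x" using cvx_chord0[OF cv g0 _ x] m x by simp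
  then show ?thesis using m x by (simp add: field_simps)
qed

lemma cvx_S4:
  fixes g :: "real \<Rightarrow> real"
  assumes cv: "convex_on {0..} g" and g0: "g 0 = 0" and M: "0 < M" and x: "0 \<le> x" "x \<le> M"
  shows "g x \<le> g M / M * x"
  using cvx_chord0[OF cv g0 x M] by (simp add: field_simps)

lemma pd_psd: assumes "pd n A" shows "psd n A"
proof -
  have h: "hermitian n A" using assms by (simp add: pd_def)
  then have Ac: "A \<in> carrier_mat n n" by (simp add: hermitian_def)
  have "Im (qform A x) = 0 \<and> 0 \<le> Re (qform A x)" if x: "x \<in> carrier_vec n" for x
  proof (cases "x = 0\<^sub>v n")
    case True
    have "qform A x = 0" using Ac True by (simp add: qform_def scalar_prod_def)
    then show ?thesis by simp
  next
    case False then show ?thesis using assms x unfolding pd_def by auto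
  qed
  then show ?thesis using h by (simp add: psd_def)
qed

lemma psd_one: "psd n (1\<^sub>m n)"
  using psd_diag[of n "\<lambda>i. 1"] by (simp add: mat_diag_one)

lemma psd_scal: "c \<ge> 0 \<Longrightarrow> psd n (scal_id n c)"
  unfolding scal_id_def by (rule psd_smult[OF psd_one])

theorem theorem2p1:
  fixes n :: nat and f f' :: "real \<Rightarrow> real" and m M :: real
    and sigma :: "complex mat \<Rightarrow> complex mat \<Rightarrow> complex mat"
    and A B :: "complex mat"
  assumes f_nonneg: "\<forall>x\<ge>0. f x \<ge> 0"
    and f_deriv: "\<forall>x\<ge>0. (f has_real_derivative f' x) (at x within {0..})"
    and f0: "f 0 = 0"
    and mM: "0 < m" "m < M"
    and mean: "matrix_mean n sigma"
    and A: "pd n A" "spec_in n m M A"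
    and B: "pd n B" "spec_in n m M B"
  shows
    "(convex_on {0..} f \<longrightarrow>
        loewner_le n (complex_of_real (f' 0) \<cdot>\<^sub>m sigma A B) (complex_of_real (f m / m) \<cdot>\<^sub>m sigma A B) \<and>
        loewner_le n (complex_of_real (f m / m) \<cdot>\<^sub>m sigma A B) (sigma (mat_fun n f A) (mat_fun n f B)) \<and>
        loewner_le n (sigma (mat_fun n f A) (mat_fun n f B)) (complex_of_real (f M / M) \<cdot>\<^sub>m sigma A B) \<and>
        loewner_le n (complex_of_real (f M / M) \<cdot>\<^sub>m sigma A B) (complex_of_real (f' M) \<cdot>\<^sub>m sigma A B) \<and>
        loewner_le n (complex_of_real (f' 0) \<cdot>\<^sub>m sigma A B) (complex_of_real (f m / m) \<cdot>\<^sub>m sigma A B) \<and>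
        loewner_le n (complex_of_real (f m / m) \<cdot>\<^sub>m sigma A B) (mat_fun n f (sigma A B)) \<and>
        loewner_le n (mat_fun n f (sigma A B)) (complex_of_real (f M / M) \<cdot>\<^sub>m sigma A B) \<and>
        loewner_le n (complex_of_real (f M / M) \<cdot>\<^sub>m sigma A B) (complex_of_real (f' M) \<cdot>\<^sub>m sigma A B))
   \<and> (concave_on {0..} f \<longrightarrow>
        loewner_le n (complex_of_real (f m / m) \<cdot>\<^sub>m sigma A B) (complex_of_real (f' 0) \<cdot>\<^sub>m sigma A B) \<and>
        loewner_le n (sigma (mat_fun n f A) (mat_fun n f B)) (complex_of_real (f m / m) \<cdot>\<^sub>m sigma A B) \<and>
        loewner_le n (complex_of_real (f M / M) \<cdot>\<^sub>m sigma A B) (sigma (mat_fun n f A) (mat_fun n f B)) \<and>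
        loewner_le n (complex_of_real (f' M) \<cdot>\<^sub>m sigma A B) (complex_of_real (f M / M) \<cdot>\<^sub>m sigma A B) \<and>
        loewner_le n (complex_of_real (f m / m) \<cdot>\<^sub>m sigma A B) (complex_of_real (f' 0) \<cdot>\<^sub>m sigma A B) \<and>
        loewner_le n (mat_fun n f (sigma A B)) (complex_of_real (f m / m) \<cdot>\<^sub>m sigma A B) \<and>
        loewner_le n (complex_of_real (f M / M) \<cdot>\<^sub>m sigma A B) (mat_fun n f (sigma A B)) \<and>
        loewner_le n (complex_of_real (f' M) \<cdot>\<^sub>m sigma A B) (complex_of_real (f M / M) \<cdot>\<^sub>m sigma A B))"
  proof -
  have Ap: "psd n A" and Bp: "psd n B" using A B pd_psd by auto
  have hA: "hermitian n A" and hB: "hermitian n B" using Ap Bp psd_herm by auto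
  define S where "S = sigma A B"
  have Sp: "psd n S" unfolding S_def by (rule mean_psd[OF mean Ap Bp])
  have hS: "hermitian n S" using Sp psd_herm by auto
  have m0: "m \<ge> 0" and M0: "M \<ge> 0" using mM by auto
  have one: "sigma (1\<^sub>m n) (1\<^sub>m n) = 1\<^sub>m n" by (rule mean_one[OF mean])
  have L1: "loewner_le n (scal_id n m) (sigma (scal_id n m) (scal_id n m))"
    using homog_lower[OF mean psd_one psd_one m0] one by (simp add: scal_id_def)
  have L2: "loewner_le n (sigma (scal_id n m) (scal_id n m)) S"
    unfolding S_def by (rule mean_mono[OF mean psd_scal[OF m0] psd_scal[OF m0] Ap Bp])
      (use A B in \<open>auto simp: spec_in_def\<close>)
  have specS1: "loewner_le n (scal_id n m) S" by (rule loewner_trans[OF L1 L2])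
  have L3: "loewner_le n S (sigma (scal_id n M) (scal_id n M))"
    unfolding S_def by (rule mean_mono[OF mean Ap Bp psd_scal[OF M0] psd_scal[OF M0]])
      (use A B in \<open>auto simp: spec_in_def\<close>)
  have L4: "loewner_le n (sigma (scal_id n M) (scal_id n M)) (scal_id n M)"
    using homog_upper[OF mean psd_one psd_one M0] one by (simp add: scal_id_def)
  have specS2: "loewner_le n S (scal_id n M)" by (rule loewner_trans[OF L3 L4])
  have sS: "spec_in n m M S" using specS1 specS2 by (simp add: spec_in_def)
  have sA: "spec_in n m M A" and sB: "spec_in n m M B" using A B by auto
  have d0: "(f has_real_derivative f' 0) (at 0 within {0..})" and dM: "(f has_real_derivative f' M) (at M within {0..})"
    using f_deriv mM by auto
  have fnn: "\<And>x. m \<le> x \<Longrightarrow> x \<le> M \<Longrightarrow> 0 \<le> f x" using f_nonneg mM by auto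
  have fAp: "psd n (mat_fun n f A)" by (rule matfun_psd[OF hA sA fnn])
  have fBp: "psd n (mat_fun n f B)" by (rule matfun_psd[OF hB sB fnn])
  define c where "c = f m / m"
  define c' where "c' = f M / M"
  have c0: "c \<ge> 0" and c'0: "c' \<ge> 0" using f_nonneg mM by (auto simp: c_def c'_def)
  have cA: "psd n (complex_of_real c \<cdot>\<^sub>m A)" "psd n (complex_of_real c \<cdot>\<^sub>m B)"
    "psd n (complex_of_real c' \<cdot>\<^sub>m A)" "psd n (complex_of_real c' \<cdot>\<^sub>m B)"
    using psd_smult Ap Bp c0 c'0 by auto
  have convex_part: "(convex_on {0..} f \<longrightarrow>
        loewner_le n (complex_of_real (f' 0) \<cdot>\<^sub>m sigma A B) (complex_of_real (f m / m) \<cdot>\<^sub>m sigma A B) \<and>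
        loewner_le n (complex_of_real (f m / m) \<cdot>\<^sub>m sigma A B) (sigma (mat_fun n f A) (mat_fun n f B)) \<and>
        loewner_le n (sigma (mat_fun n f A) (mat_fun n f B)) (complex_of_real (f M / M) \<cdot>\<^sub>m sigma A B) \<and>
        loewner_le n (complex_of_real (f M / M) \<cdot>\<^sub>m sigma A B) (complex_of_real (f' M) \<cdot>\<^sub>m sigma A B) \<and>
        loewner_le n (complex_of_real (f' 0) \<cdot>\<^sub>m sigma A B) (complex_of_real (f m / m) \<cdot>\<^sub>m sigma A B) \<and>
        loewner_le n (complex_of_real (f m / m) \<cdot>\<^sub>m sigma A B) (mat_fun n f (sigma A B)) \<and>
        loewner_le n (mat_fun n f (sigma A B)) (complex_of_real (f M / M) \<cdot>\<^sub>m sigma A B) \<and>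
        loewner_le n (complex_of_real (f M / M) \<cdot>\<^sub>m sigma A B) (complex_of_real (f' M) \<cdot>\<^sub>m sigma A B))"
  proof
    assume cv: "convex_on {0..} f"
    have S1: "f' 0 \<le> c" unfolding c_def by (rule cvx_S1[where g'=f', OF cv f0 mM(1) d0])
    have S2: "c' \<le> f' M" unfolding c'_def by (rule cvx_S2[where g'=f', OF cv f0 _ dM]) (use mM in auto)
    have lo: "\<And>x. m \<le> x \<Longrightarrow> x \<le> M \<Longrightarrow> c * x \<le> f x" unfolding c_def
      by (rule cvx_S3[OF cv f0 mM(1)])
    have hi: "\<And>x. m \<le> x \<Longrightarrow> x \<le> M \<Longrightarrow> f x \<le> c' * x" unfolding c'_def
      by (rule cvx_S4[OF cv f0]) (use mM in auto)
    have i1: "loewner_le n (complex_of_real (f' 0) \<cdot>\<^sub>m S) (complex_of_real c \<cdot>\<^sub>m S)"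
      by (rule loewner_scal[OF Sp S1])
    have i4: "loewner_le n (complex_of_real c' \<cdot>\<^sub>m S) (complex_of_real (f' M) \<cdot>\<^sub>m S)"
      by (rule loewner_scal[OF Sp S2])
    have i2: "loewner_le n (complex_of_real c \<cdot>\<^sub>m S) (sigma (mat_fun n f A) (mat_fun n f B))"
      unfolding S_def
      by (rule loewner_trans[OF homog_lower[OF mean Ap Bp c0] mean_mono[OF mean cA(1,2) fAp fBp matfun_lower[OF hA sA lo] matfun_lower[OF hB sB lo]]])
    have i3: "loewner_le n (sigma (mat_fun n f A) (mat_fun n f B)) (complex_of_real c' \<cdot>\<^sub>m S)"
      unfolding S_def
      by (rule loewner_trans[OF mean_mono[OF mean fAp fBp cA(3,4) matfun_upper[OF hA sA hi] matfun_upper[OF hB sB hi]] homog_upper[OF mean Ap Bp c'0]])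
    have i6: "loewner_le n (complex_of_real c \<cdot>\<^sub>m S) (mat_fun n f S)"
      by (rule matfun_lower[OF hS sS lo])
    have i7: "loewner_le n (mat_fun n f S) (complex_of_real c' \<cdot>\<^sub>m S)"
      by (rule matfun_upper[OF hS sS hi])
    show "loewner_le n (complex_of_real (f' 0) \<cdot>\<^sub>m sigma A B) (complex_of_real (f m / m) \<cdot>\<^sub>m sigma A B) \<and>
        loewner_le n (complex_of_real (f m / m) \<cdot>\<^sub>m sigma A B) (sigma (mat_fun n f A) (mat_fun n f B)) \<and>
        loewner_le n (sigma (mat_fun n f A) (mat_fun n f B)) (complex_of_real (f M / M) \<cdot>\<^sub>m sigma A B) \<and>
        loewner_le n (complex_of_real (f M / M) \<cdot>\<^sub>m sigma A B) (complex_of_real (f' M) \<cdot>\<^sub>m sigma A B) \<and>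
        loewner_le n (complex_of_real (f' 0) \<cdot>\<^sub>m sigma A B) (complex_of_real (f m / m) \<cdot>\<^sub>m sigma A B) \<and>
        loewner_le n (complex_of_real (f m / m) \<cdot>\<^sub>m sigma A B) (mat_fun n f (sigma A B)) \<and>
        loewner_le n (mat_fun n f (sigma A B)) (complex_of_real (f M / M) \<cdot>\<^sub>m sigma A B) \<and>
        loewner_le n (complex_of_real (f M / M) \<cdot>\<^sub>m sigma A B) (complex_of_real (f' M) \<cdot>\<^sub>m sigma A B)" using i1 i2 i3 i4 i6 i7 unfolding S_def c_def c'_def by blast
  qed
  have concave_part: "(concave_on {0..} f \<longrightarrow>
        loewner_le n (complex_of_real (f m / m) \<cdot>\<^sub>m sigma A B) (complex_of_real (f' 0) \<cdot>\<^sub>m sigma A B) \<and>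
        loewner_le n (sigma (mat_fun n f A) (mat_fun n f B)) (complex_of_real (f m / m) \<cdot>\<^sub>m sigma A B) \<and>
        loewner_le n (complex_of_real (f M / M) \<cdot>\<^sub>m sigma A B) (sigma (mat_fun n f A) (mat_fun n f B)) \<and>
        loewner_le n (complex_of_real (f' M) \<cdot>\<^sub>m sigma A B) (complex_of_real (f M / M) \<cdot>\<^sub>m sigma A B) \<and>
        loewner_le n (complex_of_real (f m / m) \<cdot>\<^sub>m sigma A B) (complex_of_real (f' 0) \<cdot>\<^sub>m sigma A B) \<and>
        loewner_le n (mat_fun n f (sigma A B)) (complex_of_real (f m / m) \<cdot>\<^sub>m sigma A B) \<and>
        loewner_le n (complex_of_real (f M / M) \<cdot>\<^sub>m sigma A B) (mat_fun n f (sigma A B)) \<and>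
        loewner_le n (complex_of_real (f' M) \<cdot>\<^sub>m sigma A B) (complex_of_real (f M / M) \<cdot>\<^sub>m sigma A B))"
  proof
    assume cc: "concave_on {0..} f"
    define g where "g = (\<lambda>x. - f x)"
    have cv: "convex_on {0..} g" using cc by (simp add: concave_on_def g_def)
    have g0: "g 0 = 0" using f0 by (simp add: g_def)
    have gd0: "(g has_real_derivative - f' 0) (at 0 within {0..})" unfolding g_def by (rule DERIV_minus[OF d0])
    have gdM: "(g has_real_derivative - f' M) (at M within {0..})" unfolding g_def by (rule DERIV_minus[OF dM])
    have S1: "c \<le> f' 0" using cvx_S1[OF cv g0 mM(1), of "\<lambda>x. - f' x"] gd0 by (simp add: g_def c_def)
    have S2: "f' M \<le> c'" using cvx_S2[OF cv g0 _ , of M "\<lambda>x. - f' x"] gdM mM by (simp add: g_def c'_def)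
    have hi: "f x \<le> c * x" if "m \<le> x" "x \<le> M" for x
      using cvx_S3[OF cv g0 mM(1) that(1)] by (simp add: g_def c_def)
    have lo: "c' * x \<le> f x" if "m \<le> x" "x \<le> M" for x
      using cvx_S4[OF cv g0 _ _ that(2)] mM that by (simp add: g_def c'_def)
    have i1: "loewner_le n (complex_of_real c \<cdot>\<^sub>m S) (complex_of_real (f' 0) \<cdot>\<^sub>m S)"
      by (rule loewner_scal[OF Sp S1])
    have i4: "loewner_le n (complex_of_real (f' M) \<cdot>\<^sub>m S) (complex_of_real c' \<cdot>\<^sub>m S)"
      by (rule loewner_scal[OF Sp S2])
    have i2: "loewner_le n (sigma (mat_fun n f A) (mat_fun n f B)) (complex_of_real c \<cdot>\<^sub>m S)"
      unfolding S_def
      by (rule loewner_trans[OF mean_mono[OF mean fAp fBp cA(1,2) matfun_upper[OF hA sA hi] matfun_upper[OF hB sB hi]] homog_upper[OF mean Ap Bp c0]])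
    have i3: "loewner_le n (complex_of_real c' \<cdot>\<^sub>m S) (sigma (mat_fun n f A) (mat_fun n f B))"
      unfolding S_def
      by (rule loewner_trans[OF homog_lower[OF mean Ap Bp c'0] mean_mono[OF mean cA(3,4) fAp fBp matfun_lower[OF hA sA lo] matfun_lower[OF hB sB lo]]])
    have i6: "loewner_le n (mat_fun n f S) (complex_of_real c \<cdot>\<^sub>m S)"
      by (rule matfun_upper[OF hS sS hi])
    have i7: "loewner_le n (complex_of_real c' \<cdot>\<^sub>m S) (mat_fun n f S)"
      by (rule matfun_lower[OF hS sS lo])
    show "loewner_le n (complex_of_real (f m / m) \<cdot>\<^sub>m sigma A B) (complex_of_real (f' 0) \<cdot>\<^sub>m sigma A B) \<and>
        loewner_le n (sigma (mat_fun n f A) (mat_fun n f B)) (complex_of_real (f m / m) \<cdot>\<^sub>m sigma A B) \<and>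
        loewner_le n (complex_of_real (f M / M) \<cdot>\<^sub>m sigma A B) (sigma (mat_fun n f A) (mat_fun n f B)) \<and>
        loewner_le n (complex_of_real (f' M) \<cdot>\<^sub>m sigma A B) (complex_of_real (f M / M) \<cdot>\<^sub>m sigma A B) \<and>
        loewner_le n (complex_of_real (f m / m) \<cdot>\<^sub>m sigma A B) (complex_of_real (f' 0) \<cdot>\<^sub>m sigma A B) \<and>
        loewner_le n (mat_fun n f (sigma A B)) (complex_of_real (f m / m) \<cdot>\<^sub>m sigma A B) \<and>
        loewner_le n (complex_of_real (f M / M) \<cdot>\<^sub>m sigma A B) (mat_fun n f (sigma A B)) \<and>
        loewner_le n (complex_of_real (f' M) \<cdot>\<^sub>m sigma A B) (complex_of_real (f M / M) \<cdot>\<^sub>m sigma A B)" using i1 i2 i3 i4 i6 i7 unfolding S_def c_def c'_def by blast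
  qed
  show ?thesis using convex_part concave_part by blast
qed


end
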